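(* Let $k$ be a positive integer and $L=\{\ell_1,\ldots,\ell_s\}\subset[0,k-1]$ with $\ell_1<\cdots<\ell_s$; suppose $L$ contains $b$ full runs of consecutive integers with lengths $m_1,\ldots,m_b$. For integers $n>k$, $0\le u\le k$ and $0\le i\le k$ let \[P_i^u=\sum_{j=0}^{i}(-1)^j\binom{u}{j}\binom{k-u}{i-j}\binom{n-k-u}{i-j},\] and let $P$ be the $s\times s$ matrix with $(i,j)$-entry $P_{k-\ell_j}^{\ell_i+1}$. Then, as $n\to\infty$ (with $k,L$ fixed), \[\det(P)=(-1)^sC\,n^{sk-(\ell_1+\cdots+\ell_s)-s}+O\!\left(n^{sk-(\ell_1+\cdots+\ell_s)-s-1}\right),\qquad C=\frac{\prod_{i=1}^s(\ell_i+1)}{\prod_{i=1}^b m_i!\,\prod_{i=1}^s(k-\ell_i-1)!}.\] In particular, $P$ is invertible for all sufficiently large $n$.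
   Context: $[a,b]=\{a,\ldots,b\}$. For $L=\{\ell_1<\cdots<\ell_s\}$, a subset $\{\ell_m,\ldots,\ell_{m+p}\}$ is a run if $\ell_{m+i}=\ell_m+i$ for $0\le i\le p$; it is a full run if moreover ($m=1$ or $\ell_{m-1}<\ell_m-1$) and ($m+p=s$ or $\ell_{m+p+1}>\ell_{m+p}+1$). The length of a run is its cardinality. Binomial coefficients $\binom{a}{c}$ are $0$ when $c<0$ or $c>a\ge0$. *)

theory Defs
  imports "Jordan_Normal_Form.Determinant" "HOL-Library.Landau_Symbols"
begin

definition elt :: "nat set \<Rightarrow> nat \<Rightarrow> nat" where
  "elt L i = sorted_list_of_set L ! i"

definition full_runs :: "nat set \<Rightarrow> nat set set" where
  "full_runs L = {R. \<exists>a p. R = {a..a+p} \<and> R \<subseteq> L \<and> (a = 0 \<or> a - 1 \<notin> L) \<and> a + p + 1 \<notin> L}"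

text \<open>P_i^u; the binomial with upper argument n-k-u (possibly negative for small n)
  is the generalized binomial coefficient.\<close>
definition Pcoef :: "nat \<Rightarrow> nat \<Rightarrow> nat \<Rightarrow> nat \<Rightarrow> real" where
  "Pcoef k n u i = (\<Sum>j=0..i. (-1)^j * real (u choose j) * real ((k - u) choose (i - j))
        * ((real_of_int (int n - int k - int u)) gchoose (i - j)))"

definition Pmat :: "nat \<Rightarrow> nat set \<Rightarrow> nat \<Rightarrow> real mat" where
  "Pmat k L n = mat (card L) (card L) (\<lambda>(i,j). Pcoef k n (elt L i + 1) (k - elt L j))"

end

theory Submission
  imports Defs
begin


definition AS :: "(nat \<Rightarrow> real) \<Rightarrow> real \<Rightarrow> real \<Rightarrow> bool" where
  "AS f c a \<longleftrightarrow> (\<lambda>n. f n - c * real n powr a) \<in> O(\<lambda>n. real n powr (a - 1))"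

lemma powr_bigo_mono:
  assumes "a \<le> b"
  shows "(\<lambda>n::nat. real n powr a) \<in> O(\<lambda>n. real n powr b)"
proof (rule bigoI[where c=1])
  show "\<forall>\<^sub>F n in at_top. norm (real n powr a) \<le> 1 * norm (real n powr b)"
    using eventually_ge_at_top[of "1::nat"]
  proof eventually_elim
    case (elim n)
    then show ?case using assms by (simp add: powr_mono)
  qed
qed

lemma AS_bigo:
  assumes "AS f c a" shows "f \<in> O(\<lambda>n. real n powr a)"
proof -
  have 1: "(\<lambda>n. f n - c * real n powr a) \<in> O(\<lambda>n. real n powr a)"
    using landau_o.big_trans[OF assms[unfolded AS_def] powr_bigo_mono[of "a-1" a]] by simp
  have 2: "(\<lambda>n. c * real n powr a) \<in> O(\<lambda>n. real n powr a)"
    by (rule bigoI[where c="abs c"]) (simp add: abs_mult)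
  have "(\<lambda>n. (f n - c * real n powr a) + c * real n powr a) \<in> O(\<lambda>n. real n powr a)"
    using sum_in_bigo(1)[OF 1 2] .
  then show ?thesis by simp
qed
lemma AS_mult:
  assumes f: "AS f c a" and g: "AS g d b"
  shows "AS (\<lambda>n. f n * g n) (c * d) (a + b)"
proof -
  have gb: "g \<in> O(\<lambda>n. real n powr b)" using AS_bigo[OF g] .
  have t1: "(\<lambda>n. (f n - c * real n powr a) * g n) \<in> O(\<lambda>n. real n powr (a - 1) * real n powr b)"
    using landau_o.big.mult[OF f[unfolded AS_def] gb] .
  have cb: "(\<lambda>n. c * real n powr a) \<in> O(\<lambda>n. real n powr a)"
    by (rule bigoI[where c="abs c"]) (simp add: abs_mult)
  have t2: "(\<lambda>n. c * real n powr a * (g n - d * real n powr b)) \<in> O(\<lambda>n. real n powr a * real n powr (b - 1))"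
    using landau_o.big.mult[OF cb g[unfolded AS_def]] .
  have e1: "(\<lambda>n. real n powr (a - 1) * real n powr b) = (\<lambda>n. real n powr (a + b - 1))"
    by (rule ext) (simp add: powr_add[symmetric] algebra_simps)
  have e2: "(\<lambda>n. real n powr a * real n powr (b - 1)) = (\<lambda>n. real n powr (a + b - 1))"
    by (rule ext) (simp add: powr_add[symmetric] algebra_simps)
  have r: "(\<lambda>n. (f n - c * real n powr a) * g n + c * real n powr a * (g n - d * real n powr b)) \<in> O(\<lambda>n. real n powr (a + b - 1))"
    using sum_in_bigo(1)[OF t1[unfolded e1] t2[unfolded e2]] .
  have eq: "(\<lambda>n. (f n - c * real n powr a) * g n + c * real n powr a * (g n - d * real n powr b)) = (\<lambda>n. f n * g n - c * d * real n powr (a + b))"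
    by (rule ext) (simp add: powr_add algebra_simps)
  show ?thesis unfolding AS_def using r by (simp only: eq)
qed

lemma AS_sum:
  assumes "finite A" "\<And>i. i \<in> A \<Longrightarrow> AS (f i) (c i) a"
  shows "AS (\<lambda>n. \<Sum>i\<in>A. f i n) (\<Sum>i\<in>A. c i) a"
proof -
  have r: "(\<lambda>n. \<Sum>i\<in>A. f i n - c i * real n powr a) \<in> O(\<lambda>n. real n powr (a - 1))"
    by (rule big_sum_in_bigo) (use assms in \<open>simp add: AS_def\<close>)
  have eq: "(\<lambda>n. \<Sum>i\<in>A. f i n - c i * real n powr a) = (\<lambda>n. (\<Sum>i\<in>A. f i n) - (\<Sum>i\<in>A. c i) * real n powr a)"
    by (rule ext) (simp add: sum_subtractf sum_distrib_right)
  show ?thesis unfolding AS_def using r by (simp only: eq)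
qed

lemma AS_cong:
  assumes "AS f c a" "eventually (\<lambda>n. f n = g n) at_top"
  shows "AS g c a"
proof -
  have "eventually (\<lambda>n. f n - c * real n powr a = g n - c * real n powr a) at_top"
    using assms(2) by eventually_elim simp
  from landau_o.big.in_cong[OF this] show ?thesis using assms(1) unfolding AS_def by (simp only:)
qed

lemma AS_one: "AS (\<lambda>n. 1) 1 0"
proof -
  have ev: "eventually (\<lambda>n::nat. 0 = 1 - 1 * real n powr 0) at_top"
    using eventually_ge_at_top[of "1::nat"] by eventually_elim simp
  have z: "(\<lambda>n::nat. 0::real) \<in> O(\<lambda>n. real n powr (0 - 1))"
    by (rule zero_in_bigo)
  show ?thesis unfolding AS_def using landau_o.big.in_cong[OF ev] z by (simp only:)
qed
lemma AS_prod:
  assumes "finite A" "\<And>i. i \<in> A \<Longrightarrow> AS (f i) (c i) (a i)"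
  shows "AS (\<lambda>n. \<Prod>i\<in>A. f i n) (\<Prod>i\<in>A. c i) (\<Sum>i\<in>A. a i)"
  using assms
proof (induction A rule: finite_induct)
  case empty
  then show ?case using AS_one by simp
next
  case (insert x F)
  have "AS (\<lambda>n. f x n * (\<Prod>i\<in>F. f i n)) (c x * (\<Prod>i\<in>F. c i)) (a x + (\<Sum>i\<in>F. a i))"
    by (rule AS_mult) (use insert in auto)
  then show ?case using insert by simp
qed

lemma AS_cmult: assumes "AS f c a" shows "AS (\<lambda>n. K * f n) (K * c) a"
proof -
  have r: "(\<lambda>n. K * (f n - c * real n powr a)) \<in> O(\<lambda>n. real n powr (a - 1))"
    using landau_o.big.mult[OF bigo_const[of K] assms[unfolded AS_def]] by simp
  have eq: "(\<lambda>n. K * (f n - c * real n powr a)) = (\<lambda>n. K * f n - K * c * real n powr a)"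
    by (rule ext) (simp add: algebra_simps)
  show ?thesis unfolding AS_def using r by (simp only: eq)
qed

lemma AS_lower: assumes "AS f c a" "a \<le> b - 1" shows "AS f 0 b"
  using landau_o.big_trans[OF AS_bigo[OF assms(1)] powr_bigo_mono[OF assms(2)]]
  unfolding AS_def by (simp only: mult_zero_left diff_zero)

lemma AS_zero: "AS (\<lambda>n. 0) 0 a"
  unfolding AS_def by (simp only: mult_zero_left diff_zero zero_in_bigo)

lemma AS_lin: "AS (\<lambda>n. real n - d) 1 1"
proof -
  have ev: "eventually (\<lambda>n::nat. - d = real n - d - 1 * real n powr 1) at_top"
    using eventually_ge_at_top[of "1::nat"] by eventually_elim simp
  have "(\<lambda>n::nat. - d) \<in> O(\<lambda>n. real n powr (1 - 1))"
  proof (rule bigoI[where c="abs d"])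
    show "\<forall>\<^sub>F n in at_top. norm (- d) \<le> \<bar>d\<bar> * norm (real n powr (1 - 1))"
      using eventually_ge_at_top[of "1::nat"] by eventually_elim simp
  qed
  then show ?thesis unfolding AS_def using landau_o.big.in_cong[OF ev] by (simp only:)
qed

lemma AS_gchoose: "AS (\<lambda>n. (real n - d) gchoose t) (1 / fact t) (real t)"
proof -
  have "AS (\<lambda>n. \<Prod>i\<in>{0..<t}. real n - (d + real i)) (\<Prod>i\<in>{0..<t}. 1) (\<Sum>i\<in>{0..<t}. 1)"
    by (rule AS_prod) (auto intro: AS_lin)
  then have "AS (\<lambda>n. (1 / fact t) * (\<Prod>i\<in>{0..<t}. real n - (d + real i))) (1 / fact t * 1) (real t)"
    using AS_cmult[of _ 1 "real t" "1 / fact t"] by simp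
  moreover have "(\<lambda>n. (1 / fact t) * (\<Prod>i\<in>{0..<t}. real n - (d + real i))) = (\<lambda>n. (real n - d) gchoose t)"
    by (rule ext) (simp add: gbinomial_prod_rev algebra_simps)
  ultimately show ?thesis by simp
qed
definition lam :: "nat \<Rightarrow> nat \<Rightarrow> nat \<Rightarrow> real" where
  "lam k u I = (\<Sum>j=0..I. (if I - j = k - u then (-1)^j * real (u choose j) * real ((k - u) choose (I - j)) / fact (I - j) else 0))"

lemma AS_Pcoef: "AS (\<lambda>n. Pcoef k n u I) (lam k u I) (real (k - u))"
proof -
  have eq: "(\<lambda>n. Pcoef k n u I) = (\<lambda>n. \<Sum>j=0..I. (-1)^j * real (u choose j) * real ((k - u) choose (I - j))
        * ((real n - real (k + u)) gchoose (I - j)))"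
    by (rule ext) (simp add: Pcoef_def algebra_simps)
  have "AS (\<lambda>n. \<Sum>j=0..I. (-1)^j * real (u choose j) * real ((k - u) choose (I - j))
        * ((real n - real (k + u)) gchoose (I - j))) (lam k u I) (real (k - u))"
    unfolding lam_def
  proof (rule AS_sum)
    fix j assume "j \<in> {0..I}"
    define K where "K = (-1)^j * real (u choose j) * real ((k - u) choose (I - j))"
    have A: "AS (\<lambda>n. K * ((real n - real (k + u)) gchoose (I - j))) (K * (1 / fact (I - j))) (real (I - j))"
      by (rule AS_cmult) (rule AS_gchoose)
    consider "I - j = k - u" | "I - j > k - u" | "I - j < k - u" by linarith
    then show "AS (\<lambda>n. (-1)^j * real (u choose j) * real ((k - u) choose (I - j))
        * ((real n - real (k + u)) gchoose (I - j)))
       (if I - j = k - u then (-1)^j * real (u choose j) * real ((k - u) choose (I - j)) / fact (I - j) else 0)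
       (real (k - u))"
    proof cases
      case 1
      then show ?thesis using A unfolding K_def by simp
    next
      case 2
      have z: "(k - u) choose (I - j) = 0" using 2 by simp
      show ?thesis using AS_zero 2 by (simp add: z)
    next
      case 3
      have "AS (\<lambda>n. K * ((real n - real (k + u)) gchoose (I - j))) 0 (real (k - u))"
        by (rule AS_lower[OF A]) (use 3 in auto)
      then show ?thesis using 3 unfolding K_def by simp
    qed
  qed simp
  then show ?thesis unfolding eq .
qed
lemma det_mat_sum: "det (mat s s (\<lambda>(i,j). F i j)) = (\<Sum>p\<in>{p. p permutes {0..<s}}. signof p * (\<Prod>i=0..<s. F i (p i)))"
proof -
  have "det (mat s s (\<lambda>(i,j). F i j)) = (\<Sum>p\<in>{p. p permutes {0..<s}}. signof p * (\<Prod>i=0..<s. mat s s (\<lambda>(i,j). F i j) $$ (i, p i)))"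
    by (rule det_def') simp
  also have "\<dots> = (\<Sum>p\<in>{p. p permutes {0..<s}}. signof p * (\<Prod>i=0..<s. F i (p i)))"
  proof (rule sum.cong[OF refl])
    fix p assume "p \<in> {p. p permutes {0..<s}}"
    then have "\<And>i. i < s \<Longrightarrow> p i < s" using permutes_in_image by fastforce
    then show "signof p * (\<Prod>i=0..<s. mat s s (\<lambda>(i,j). F i j) $$ (i, p i)) = signof p * (\<Prod>i=0..<s. F i (p i))"
      by (auto intro!: prod.cong)
  qed
  finally show ?thesis .
qed

lemma AS_det:
  assumes "\<And>i j. i < s \<Longrightarrow> j < s \<Longrightarrow> AS (\<lambda>n. F n i j) (G i j) (a i)"
  shows "AS (\<lambda>n. det (mat s s (\<lambda>(i,j). F n i j))) (det (mat s s (\<lambda>(i,j). G i j))) (\<Sum>i=0..<s. a i)"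
  unfolding det_mat_sum
proof (rule AS_sum)
  fix p assume "p \<in> {p. p permutes {0..<s}}"
  then have ps: "\<And>i. i < s \<Longrightarrow> p i < s" using permutes_in_image by fastforce
  show "AS (\<lambda>n. signof p * (\<Prod>i=0..<s. F n i (p i))) (signof p * (\<Prod>i=0..<s. G i (p i))) (\<Sum>i=0..<s. a i)"
    by (rule AS_cmult, rule AS_prod) (auto intro: assms ps)
qed (simp add: finite_permutations)
lemma det_scale:
  "det (mat n n (\<lambda>(i,j). \<alpha> i * \<beta> j * g i j)) = (\<Prod>i=0..<n. \<alpha> i) * (\<Prod>i=0..<n. \<beta> i) * det (mat n n (\<lambda>(i,j). g i j))"
  unfolding det_mat_sum sum_distrib_left
proof (rule sum.cong[OF refl])
  fix p assume "p \<in> {p. p permutes {0..<n}}"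
  then have pp: "p permutes {0..<n}" by simp
  have b: "(\<Prod>i=0..<n. \<beta> (p i)) = (\<Prod>i=0..<n. \<beta> i)"
    using prod.permute[OF pp, of \<beta>] by (simp add: comp_def)
  show "signof p * (\<Prod>i=0..<n. \<alpha> i * \<beta> (p i) * g i (p i)) =
        (\<Prod>i=0..<n. \<alpha> i) * (\<Prod>i=0..<n. \<beta> i) * (signof p * (\<Prod>i=0..<n. g i (p i)))"
    by (simp add: prod.distrib b)
qed
lemma det_Q: "det (mat m m (\<lambda>(i,j). real ((i+1) choose j))) = 1"
proof -
  define Pa where "Pa = mat m m (\<lambda>(i,j). real (i choose j))"
  define S where "S = mat m m (\<lambda>(i,j). if i = j \<or> i + 1 = j then 1 else (0::real))"
  have PaC: "Pa \<in> carrier_mat m m" and SC: "S \<in> carrier_mat m m" unfolding Pa_def S_def by auto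
  have prodeq: "Pa * S = mat m m (\<lambda>(i,j). real ((i+1) choose j))"
  proof (rule eq_matI)
    fix i j assume ij: "i < dim_row (mat m m (\<lambda>(i,j). real ((i+1) choose j)))"
        "j < dim_col (mat m m (\<lambda>(i,j). real ((i+1) choose j)))"
    then have i: "i < m" and j: "j < m" by auto
    have "(Pa * S) $$ (i,j) = (\<Sum>t\<in>{0..<m}. real (i choose t) * (if t = j \<or> t + 1 = j then 1 else 0))"
      using i j unfolding Pa_def S_def by (simp add: scalar_prod_def)
    also have "\<dots> = (\<Sum>t\<in>{0..<m}. (if t = j then real (i choose t) else 0) + (if t + 1 = j then real (i choose t) else 0))"
      by (rule sum.cong) auto
    also have "\<dots> = real (i choose j) + (if j = 0 then 0 else real (i choose (j - 1)))"
    proof -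
      have s2: "(\<Sum>t\<in>{0..<m}. (if t + 1 = j then real (i choose t) else 0)) = (if j = 0 then 0 else real (i choose (j - 1)))"
      proof (cases j)
        case 0 then show ?thesis by simp
      next
        case (Suc j')
        then have "(\<Sum>t\<in>{0..<m}. (if t + 1 = j then real (i choose t) else 0)) = (\<Sum>t\<in>{0..<m}. (if t = j' then real (i choose t) else 0))"
          by (intro sum.cong) auto
        also have "\<dots> = real (i choose j')" using j Suc by (simp add: sum.delta')
        finally show ?thesis using Suc by simp
      qed
      show ?thesis using j s2 by (simp add: sum.distrib sum.delta')
    qed
    also have "\<dots> = real ((i+1) choose j)"
      by (cases j) auto
    finally show "(Pa * S) $$ (i,j) = mat m m (\<lambda>(i,j). real ((i+1) choose j)) $$ (i,j)"
      using i j by simp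
  qed (auto simp: Pa_def S_def)
  have dP: "det Pa = 1"
  proof -
    have "det Pa = prod_list (diag_mat Pa)"
      by (rule det_lower_triangular[OF _ PaC]) (auto simp: Pa_def)
    also have "\<dots> = prod_list (map (\<lambda>i. 1) [0..<m])"
      unfolding diag_mat_def by (rule arg_cong[where f=prod_list], rule map_cong) (auto simp: Pa_def)
    also have "\<dots> = 1" by (simp add: map_replicate_const)
    finally show ?thesis .
  qed
  have dS: "det S = 1"
  proof -
    have "det S = prod_list (diag_mat S)"
      by (rule det_upper_triangular[OF _ SC]) (auto simp: S_def upper_triangular_def)
    also have "\<dots> = prod_list (map (\<lambda>i. 1) [0..<m])"
      unfolding diag_mat_def by (rule arg_cong[where f=prod_list], rule map_cong) (auto simp: S_def)
    also have "\<dots> = 1" by (simp add: map_replicate_const)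
    finally show ?thesis .
  qed
  show ?thesis using det_mult[OF PaC SC] dP dS prodeq by simp
qed
lemma block_entry: "real ((a+i+1) choose (a+j)) = fact (a+i+1) / fact (i+1) * (fact j / fact (a+j)) * real ((i+1) choose j)"
proof (cases "j \<le> i + 1")
  case True
  have "real ((a+i+1) choose (a+j)) = fact (a+i+1) / (fact (a+j) * fact (a+i+1 - (a+j)))"
    using True by (intro binomial_fact) simp
  moreover have "real ((i+1) choose j) = fact (i+1) / (fact j * fact (i+1-j))"
    using True by (intro binomial_fact) simp
  moreover have "a+i+1 - (a+j) = i+1-j" by simp
  moreover have aux: "\<And>F1 B C D G::real. B\<noteq>0 \<Longrightarrow> C\<noteq>0 \<Longrightarrow> D\<noteq>0 \<Longrightarrow> G\<noteq>0 \<Longrightarrow> F1/(D*G) = F1/B*(C/D)*(B/(C*G))"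
    by (simp add: field_simps)
  ultimately show ?thesis by (simp only:) (rule aux; simp)
next
  case False
  then have "(a+i+1) choose (a+j) = 0" "(i+1) choose j = 0" by simp_all
  then show ?thesis by (simp only:)
qed

lemma fact_prod_eq: "fact m = (\<Prod>i=0..<m. real (i+1))"
  by (induction m) (auto simp: prod.atLeast0_lessThan_Suc)

lemma det_block: "det (mat m m (\<lambda>(i,j). real ((a+i+1) choose (a+j)))) * fact m = (\<Prod>i=0..<m. real (a+i+1))"
proof -
  have "mat m m (\<lambda>(i,j). real ((a+i+1) choose (a+j))) =
        mat m m (\<lambda>(i,j). (fact (a+i+1) / fact (i+1)) * (fact j / fact (a+j)) * real ((i+1) choose j))"
    using block_entry by presburger
  then have "det (mat m m (\<lambda>(i,j). real ((a+i+1) choose (a+j)))) =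
     (\<Prod>i=0..<m. fact (a+i+1) / fact (i+1)) * (\<Prod>i=0..<m. fact i / fact (a+i)) * 1"
    using det_scale[of m "\<lambda>i. fact (a+i+1) / fact (i+1)" "\<lambda>j. fact j / fact (a+j)" "\<lambda>i j. real ((i+1) choose j)"] det_Q[of m]
    by simp
  also have "\<dots> = (\<Prod>i=0..<m. (fact (a+i+1) / fact (i+1)) * (fact i / fact (a+i)))"
    by (simp only: mult_1_right prod.distrib)
  also have "\<dots> = (\<Prod>i=0..<m. real (a+i+1) / real (i+1))"
  proof (rule prod.cong[OF refl])
    fix i
    have e1: "fact (a+i+1) = real (a+i+1) * (fact (a+i) :: real)" by simp
    have e2: "fact (i+1) = real (i+1) * (fact i :: real)" by simp
    show "fact (a+i+1) / fact (i+1) * (fact i / fact (a+i)) = real (a+i+1) / real (i+1)"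
      unfolding e1 e2 by (simp add: field_simps del: of_nat_add of_nat_Suc)
  qed
  finally have "det (mat m m (\<lambda>(i,j). real ((a+i+1) choose (a+j)))) * fact m =
      (\<Prod>i=0..<m. real (a+i+1) / real (i+1)) * (\<Prod>i=0..<m. real (i+1))"
    by (simp add: fact_prod_eq)
  also have "\<dots> = (\<Prod>i=0..<m. real (a+i+1))"
    by (simp add: prod.distrib[symmetric])
  finally show ?thesis .
qed


lemma sl_append:
  assumes "finite A" "finite B" "\<And>x y. x \<in> A \<Longrightarrow> y \<in> B \<Longrightarrow> x < y"
  shows "sorted_list_of_set (A \<union> B) = sorted_list_of_set A @ sorted_list_of_set (B::nat set)"
proof -
  have "sorted_wrt (<) (sorted_list_of_set A @ sorted_list_of_set B) \<and>
        set (sorted_list_of_set A @ sorted_list_of_set B) = A \<union> B \<and>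
        length (sorted_list_of_set A @ sorted_list_of_set B) = card (A \<union> B)"
  proof (intro conjI)
    show "sorted_wrt (<) (sorted_list_of_set A @ sorted_list_of_set B)"
      using assms by (simp add: sorted_wrt_append)
    show "set (sorted_list_of_set A @ sorted_list_of_set B) = A \<union> B" using assms by simp
    have "A \<inter> B = {}" using assms(3) by fastforce
    then show "length (sorted_list_of_set A @ sorted_list_of_set B) = card (A \<union> B)"
      using assms by (simp add: card_Un_disjoint)
  qed
  moreover have fin: "finite (A \<union> B)" using assms by simp
  ultimately show ?thesis using sorted_list_of_set_unique[OF fin] by blast
qed

lemma full_runs_split:
  fixes L :: "nat set"
  assumes fin: "finite L" and ne: "L \<noteq> {}" and y: "y = Max L" and sub: "{a..y} \<subseteq> L"
    and ha: "a = 0 \<or> a - 1 \<notin> L" and ay: "a \<le> y"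
  shows "full_runs L = insert {a..y} (full_runs (L - {a..y}))"
proof -
  have ymax: "\<And>x. x \<in> L \<Longrightarrow> x \<le> y" using y fin by simp
  have hlt: "\<And>x. x \<in> L - {a..y} \<Longrightarrow> x + 1 < a"
  proof -
    fix x assume x: "x \<in> L - {a..y}"
    then have "x < a" using ymax by force
    moreover have "x + 1 \<noteq> a" using x ha by force
    ultimately show "x + 1 < a" by simp
  qed
  show ?thesis
  proof (rule equalityI[OF subsetI subsetI])
    fix R assume "R \<in> full_runs L"
    then obtain a' p where R: "R = {a'..a'+p}" "R \<subseteq> L" "a' = 0 \<or> a' - 1 \<notin> L" "a' + p + 1 \<notin> L"
      unfolding full_runs_def by blast
    show "R \<in> insert {a..y} (full_runs (L - {a..y}))"
    proof (cases "a'+p \<ge> a")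
      case True
      have t: "a' + p \<in> L" using R by auto
      then have "a' + p \<le> y" using ymax by simp
      moreover have "\<not> a' + p < y"
      proof
        assume "a' + p < y"
        then have "a' + p + 1 \<in> {a..y}" using True by simp
        then show False using R(4) sub by blast
      qed
      ultimately have e1: "a' + p = y" by simp
      have "\<not> a' < a" 
      proof
        assume "a' < a"
        then have "a - 1 \<in> R" using R True by auto
        then show False using R(2) ha \<open>a' < a\<close> by auto
      qed
      moreover have "\<not> a' > a"
      proof
        assume "a' > a"
        then have "a' - 1 \<in> {a..y}" using e1 by auto
        then show False using R(3) sub \<open>a' > a\<close> by auto
      qed
      ultimately have "a' = a" by simp
      then show ?thesis using R e1 by simp
    next
      case False
      then have "R \<subseteq> L - {a..y}" using R by auto
      then have "R \<in> full_runs (L - {a..y})" unfolding full_runs_def using R by blast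
      then show ?thesis by simp
    qed
  next
    fix R assume "R \<in> insert {a..y} (full_runs (L - {a..y}))"
    then consider "R = {a..y}" | "R \<in> full_runs (L - {a..y})" by blast
    then show "R \<in> full_runs L"
    proof cases
      case 1
      have "y + 1 \<notin> L" using ymax by fastforce
      then have "{a..a+(y-a)} \<subseteq> L \<and> (a = 0 \<or> a - 1 \<notin> L) \<and> a + (y-a) + 1 \<notin> L"
        using sub ha ay by simp
      moreover have e: "a + (y - a) = y" using ay by simp
      ultimately have "{a..y} = {a..a+(y-a)} \<and> {a..y} \<subseteq> L \<and> (a = 0 \<or> a - 1 \<notin> L) \<and> a + (y-a) + 1 \<notin> L"
        by (simp only: e simp_thms)
      then show ?thesis unfolding full_runs_def 1 by blast
    next
      case 2
      then obtain a' p where R: "R = {a'..a'+p}" "R \<subseteq> L - {a..y}" "a' = 0 \<or> a' - 1 \<notin> L - {a..y}" "a' + p + 1 \<notin> L - {a..y}"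
        unfolding full_runs_def by blast
      have "a' + p \<in> R" using R(1) by simp
      then have "a' + p \<in> L - {a..y}" using R(2) by blast
      then have lt: "a' + p + 1 < a" using hlt by simp
      have c1: "a' + p + 1 \<notin> L" using R(4) lt by auto
      have c2: "a' = 0 \<or> a' - 1 \<notin> L" using R(3) lt by auto
      show ?thesis unfolding full_runs_def using R c1 c2 by blast
    qed
  qed
qed
definition Nm :: "nat set \<Rightarrow> real mat" where
  "Nm L = mat (card L) (card L) (\<lambda>(i,j). real ((elt L i + 1) choose elt L j))"

lemma full_runs_empty: "full_runs {} = {}"
  unfolding full_runs_def by auto

lemma det_empty: "det (mat 0 0 f) = (1::real)"
  by (simp add: det_def)

lemma D_lemma:
  assumes "finite L"
  shows "det (Nm L) * (\<Prod>R\<in>full_runs L. fact (card R)) = (\<Prod>x\<in>L. real (x+1))"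
  using assms
proof (induction "card L" arbitrary: L rule: less_induct)
  case less
  show ?case
  proof (cases "L = {}")
    case True
    then show ?thesis unfolding Nm_def by (simp add: full_runs_empty det_empty)
  next
    case False
    define y where "y = Max L"
    have yL: "y \<in> L" using False less.prems y_def by simp
    have ymax: "\<And>x. x \<in> L \<Longrightarrow> x \<le> y" using less.prems y_def by simp
    define a where "a = (LEAST a. {a..y} \<subseteq> L)"
    have sub: "{a..y} \<subseteq> L" unfolding a_def by (rule LeastI[of _ y]) (use yL in auto)
    have ay: "a \<le> y" unfolding a_def by (rule Least_le) (use yL in auto)
    have ha: "a = 0 \<or> a - 1 \<notin> L"
    proof (rule ccontr)
      assume "\<not> (a = 0 \<or> a - 1 \<notin> L)"
      then have a0: "a \<noteq> 0" and a1: "a - 1 \<in> L" by auto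
      have "{a-1..y} \<subseteq> L"
      proof
        fix x assume "x \<in> {a-1..y}"
        then have "x = a - 1 \<or> x \<in> {a..y}" by auto
        then show "x \<in> L" using a1 sub by blast
      qed
      then have "a \<le> a - 1" unfolding a_def by (rule Least_le)
      then show False using a0 by simp
    qed
    define L' where "L' = L - {a..y}"
    define m where "m = y + 1 - a"
    have hlt: "\<And>x. x \<in> L' \<Longrightarrow> x + 1 < a"
    proof -
      fix x assume x: "x \<in> L'"
      then have "x < a" using ymax unfolding L'_def by force
      moreover have "x + 1 \<noteq> a" using x ha unfolding L'_def by force
      ultimately show "x + 1 < a" by simp
    qed
    have ivl: "{a..y} = {a..<y+1}" by auto
    have LU: "L = L' \<union> {a..<y+1}" using sub ivl unfolding L'_def by auto
    have finL': "finite L'" using less.prems unfolding L'_def by simp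
    have disj: "L' \<inter> {a..<y+1} = {}" unfolding L'_def ivl by auto
    have cardL: "card L = card L' + m"
      using card_Un_disjoint[OF finL' _ disj] LU m_def by simp
    have mpos: "m > 0" using ay m_def by simp
    have ltc: "card L' < card L" using cardL mpos by simp
    have sl: "sorted_list_of_set L = sorted_list_of_set L' @ [a..<y+1]"
    proof -
      have "sorted_list_of_set (L' \<union> {a..<y+1}) = sorted_list_of_set L' @ sorted_list_of_set {a..<y+1}"
      proof (rule sl_append)
        fix x z assume "x \<in> L'" "z \<in> {a..<y+1}"
        then show "x < z" using hlt[of x] by auto
      qed (use finL' in auto)
      then show ?thesis using LU by simp
    qed
    have lenL': "length (sorted_list_of_set L') = card L'" by simp
    have e1: "\<And>i. i < card L' \<Longrightarrow> elt L i = elt L' i"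
      unfolding elt_def sl using lenL' by (simp add: nth_append)
    have e2: "\<And>i. i < m \<Longrightarrow> elt L (card L' + i) = a + i"
      unfolding elt_def sl using lenL' m_def ay by (simp add: nth_append del: upt_Suc)
    have inL': "\<And>i. i < card L' \<Longrightarrow> elt L' i \<in> L'"
    proof -
      fix i assume "i < card L'"
      then have "sorted_list_of_set L' ! i \<in> set (sorted_list_of_set L')" using lenL' by (intro nth_mem) simp
      then show "elt L' i \<in> L'" unfolding elt_def using finL' by simp
    qed
    define B where "B = mat m m (\<lambda>(i,j). real ((a+i+1) choose (a+j)))"
    define X where "X = mat m (card L') (\<lambda>(i,j). real ((a+i+1) choose elt L' j))"
    have NmL: "Nm L = four_block_mat (Nm L') (0\<^sub>m (card L') m) X B"
    proof (rule eq_matI)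
      show "dim_row (Nm L) = dim_row (four_block_mat (Nm L') (0\<^sub>m (card L') m) X B)"
        unfolding Nm_def B_def cardL by simp
      show "dim_col (Nm L) = dim_col (four_block_mat (Nm L') (0\<^sub>m (card L') m) X B)"
        unfolding Nm_def B_def cardL by simp
      fix i j assume i: "i < dim_row (four_block_mat (Nm L') (0\<^sub>m (card L') m) X B)"
        and j: "j < dim_col (four_block_mat (Nm L') (0\<^sub>m (card L') m) X B)"
      then have i': "i < card L' + m" and j': "j < card L' + m" unfolding Nm_def B_def by auto
      show "Nm L $$ (i, j) = four_block_mat (Nm L') (0\<^sub>m (card L') m) X B $$ (i, j)"
      proof -
        have lhs: "Nm L $$ (i, j) = real ((elt L i + 1) choose elt L j)"
          unfolding Nm_def using i' j' cardL by simp
        have rhs: "four_block_mat (Nm L') (0\<^sub>m (card L') m) X B $$ (i, j) =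
          (if i < card L' then if j < card L' then Nm L' $$ (i,j) else 0\<^sub>m (card L') m $$ (i, j - card L')
           else if j < card L' then X $$ (i - card L', j) else B $$ (i - card L', j - card L'))"
          using i' j' unfolding Nm_def B_def by simp
        show ?thesis
        proof (cases "i < card L'")
          case True
          note iT = True
          show ?thesis
          proof (cases "j < card L'")
            case True
            then show ?thesis unfolding lhs rhs using iT e1 by (simp add: Nm_def)
          next
            case False
            then obtain t where t: "j = card L' + t" "t < m" using j' by (metis add_diff_inverse_nat nat_add_left_cancel_less)
            have "elt L' i + 1 < a" using hlt inL' iT by blast
            then have "(elt L i + 1) choose elt L j = 0" using e1[OF iT] e2[OF t(2)] t(1) by simp
            then show ?thesis unfolding lhs rhs using iT False t by simp
          qed
        next
          case False
          note iF = False
          then obtain r where r: "i = card L' + r" "r < m" using i' by (metis add_diff_inverse_nat nat_add_left_cancel_less)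
          show ?thesis
          proof (cases "j < card L'")
            case True
            then show ?thesis unfolding lhs rhs using iF r e1 e2 by (simp add: X_def)
          next
            case False
            then obtain t where t: "j = card L' + t" "t < m" using j' by (metis add_diff_inverse_nat nat_add_left_cancel_less)
            show ?thesis unfolding lhs rhs using iF False r t e2 by (simp add: B_def)
          qed
        qed
      qed
    qed
    have detL: "det (Nm L) = det (Nm L') * det B"
      unfolding NmL by (rule det_four_block_mat_upper_right_zero) (auto simp: Nm_def B_def X_def)
    have IH: "det (Nm L') * (\<Prod>R\<in>full_runs L'. fact (card R)) = (\<Prod>x\<in>L'. real (x+1))"
      using less.hyps[OF ltc finL'] .
    have fr: "full_runs L = insert {a..y} (full_runs L')"
      unfolding L'_def by (rule full_runs_split[OF less.prems False y_def sub ha ay])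
    have notin: "{a..y} \<notin> full_runs L'"
    proof
      assume "{a..y} \<in> full_runs L'"
      then have "{a..y} \<subseteq> L'" unfolding full_runs_def by blast
      then show False using ay unfolding L'_def by auto
    qed
    have finfr: "finite (full_runs L')"
    proof (rule finite_subset)
      show "full_runs L' \<subseteq> Pow L'" unfolding full_runs_def by blast
    qed (use finL' in simp)
    have cardR: "card {a..y} = m" unfolding m_def by simp
    have prodR: "(\<Prod>R\<in>full_runs L. fact (card R)) = fact m * (\<Prod>R\<in>full_runs L'. fact (card R))"
      unfolding fr prod.insert[OF finfr notin] cardR by (rule refl)
    have prodL: "(\<Prod>x\<in>L. real (x+1)) = (\<Prod>x\<in>L'. real (x+1)) * (\<Prod>x\<in>{a..<y+1}. real (x+1))"
      by (subst LU, rule prod.union_disjoint[OF finL' _ disj]) simp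
    have shift: "(\<Prod>x\<in>{a..<y+1}. real (x+1)) = (\<Prod>i=0..<m. real (a+i+1))"
    proof -
      have iv: "{a..<y+1} = {0+a..<m+a}" using ay m_def by simp
      show ?thesis unfolding iv prod.shift_bounds_nat_ivl by (simp add: algebra_simps)
    qed
    have dB: "det B * fact m = (\<Prod>i=0..<m. real (a+i+1))" unfolding B_def by (rule det_block)
    show ?thesis
      unfolding detL prodR prodL shift dB[symmetric] IH[symmetric] by (simp add: ac_simps)
  qed
qed
lemma prod_elt:
  assumes "finite L"
  shows "(\<Prod>i<card L. f (elt L i)) = (\<Prod>x\<in>L. f x)"
proof -
  have b: "bij_betw ((!) (sorted_list_of_set L)) {..<card L} L"
    by (rule bij_betw_nth) (use assms in auto)
  have "(\<Prod>x\<in>L. f x) = (\<Prod>i<card L. f (sorted_list_of_set L ! i))"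
    using prod.reindex_bij_betw[OF b, of f] by simp
  then show ?thesis unfolding elt_def by simp
qed

lemma elt_in:
  assumes "finite L" "i < card L"
  shows "elt L i \<in> L"
proof -
  have "sorted_list_of_set L ! i \<in> set (sorted_list_of_set L)" using assms by (intro nth_mem) simp
  then show ?thesis unfolding elt_def using assms by simp
qed

lemma lam_val:
  assumes "x < k" "z < k"
  shows "lam k (x+1) (k - z) = (-1)^(x+1) * (-1)^z * real ((x+1) choose z) / fact (k - x - 1)"
proof (cases "z \<le> x + 1")
  case True
  define J where "J = x + 1 - z"
  have JI: "J \<le> k - z" using assms True unfolding J_def by simp
  have "lam k (x+1) (k - z) = (\<Sum>j=0..k-z. (if j = J then (-1)^j * real ((x+1) choose j) * real ((k - (x+1)) choose (k - z - j)) / fact (k - z - j) else 0))"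
    unfolding lam_def by (rule sum.cong[OF refl]) (use assms True in \<open>auto simp: J_def\<close>)
  also have "\<dots> = (-1)^J * real ((x+1) choose J) * real ((k - (x+1)) choose (k - z - J)) / fact (k - z - J)"
    using JI by (simp add: sum.delta)
  also have "k - z - J = k - x - 1" using assms True unfolding J_def by simp
  also have "(x+1) choose J = (x+1) choose z" unfolding J_def using True by (simp add: binomial_symmetric[symmetric])
  also have "((-1)::real)^J = (-1)^(x+1) * (-1)^z"
  proof -
    have e: "x + 1 = J + z" unfolding J_def using True by simp
    have sq: "((-1::real)^z) * (-1)^z = 1" by (simp add: power_mult_distrib[symmetric])
    show ?thesis unfolding e power_add using sq by (simp add: mult.assoc)
  qed
  finally show ?thesis by simp
next
  case False
  have "lam k (x+1) (k - z) = (\<Sum>j=0..k-z. 0)"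
    unfolding lam_def by (rule sum.cong[OF refl]) (use assms False in auto)
  then show ?thesis using False by simp
qed

lemma mat_cong': "(\<And>i j. i < n \<Longrightarrow> j < m \<Longrightarrow> f (i,j) = g (i,j)) \<Longrightarrow> mat n m f = mat n m g"
  by (rule eq_matI) auto

lemma AS_nonzero:
  assumes "AS f c a" "c \<noteq> 0"
  shows "eventually (\<lambda>n. f n \<noteq> 0) at_top"
proof -
  from assms(1)[unfolded AS_def] obtain K where K: "K > 0"
    and ev: "eventually (\<lambda>n. norm (f n - c * real n powr a) \<le> K * norm (real n powr (a - 1))) at_top"
    by (elim landau_o.bigE) blast
  have ev2: "eventually (\<lambda>n::nat. real n > K / \<bar>c\<bar> \<and> n \<ge> 1) at_top"
    using eventually_gt_at_top[of "nat \<lceil>K / \<bar>c\<bar>\<rceil>"] eventually_ge_at_top[of "1::nat"]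
    by eventually_elim linarith
  from ev ev2 show ?thesis
  proof eventually_elim
    case (elim n)
    have n0: "real n > 0" using elim by simp
    define p where "p = real n powr a"
    have p0: "p > 0" unfolding p_def using n0 by simp
    have pm: "real n powr (a - 1) = p / real n" unfolding p_def using n0 by (simp add: powr_diff)
    have "\<bar>f n - c * p\<bar> \<le> K * (p / real n)" using elim(1) p0 n0 unfolding pm p_def[symmetric] by simp
    moreover have "K / real n < \<bar>c\<bar>" using elim(2) n0 assms(2) by (simp add: field_simps)
    then have "K * (p / real n) < \<bar>c\<bar> * p" using p0 n0
      by (metis mult.commute mult_strict_right_mono times_divide_eq_left)
    ultimately have "\<bar>f n - c * p\<bar> < \<bar>c * p\<bar>" using p0 by (simp add: abs_mult)
    then show "f n \<noteq> 0" by auto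
  qed
qed

lemma invertible_of_det:
  assumes "A \<in> carrier_mat n n" "det A \<noteq> (0::real)"
  shows "invertible_mat A"
proof -
  have "A \<in> Units (ring_mat TYPE(real) n undefined)" by (rule det_non_zero_imp_unit[OF assms])
  then obtain B where B: "B \<in> carrier_mat n n" "B * A = 1\<^sub>m n" "A * B = 1\<^sub>m n"
    unfolding Units_def ring_mat_def by auto
  then show ?thesis using assms(1) unfolding invertible_mat_def inverts_mat_def square_mat.simps
    by auto
qed
theorem lemma1:
  fixes k :: nat and L :: "nat set"
  assumes "k > 0" and "L \<subseteq> {0..k-1}"
  defines "s \<equiv> card L"
  defines "E \<equiv> real (s * k) - real (\<Sum>i<s. elt L i) - real s"
  defines "C \<equiv> (\<Prod>i<s. real (elt L i + 1)) /
      ((\<Prod>R\<in>full_runs L. fact (card R)) * (\<Prod>i<s. fact (k - elt L i - 1)))"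
  shows "(\<lambda>n. det (Pmat k L n) - (-1)^s * C * real n powr E) \<in> O(\<lambda>n. real n powr (E - 1)) \<and>
         eventually (\<lambda>n. invertible_mat (Pmat k L n)) at_top"
proof -
  have finL: "finite L" using assms(2) finite_subset by blast
  have eltk: "\<And>i. i < s \<Longrightarrow> elt L i < k"
  proof -
    fix i assume "i < s"
    then have "elt L i \<in> L" using elt_in[OF finL] s_def by simp
    then show "elt L i < k" using assms(1,2) by force
  qed
  have Pm: "\<And>n. Pmat k L n = mat s s (\<lambda>(i,j). Pcoef k n (elt L i + 1) (k - elt L j))"
    unfolding Pmat_def s_def ..
  define Lam where "Lam = mat s s (\<lambda>(i,j). lam k (elt L i + 1) (k - elt L j))"
  have AS1: "AS (\<lambda>n. det (Pmat k L n)) (det Lam) (\<Sum>i=0..<s. real (k - (elt L i + 1)))"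
    unfolding Pm Lam_def by (rule AS_det) (rule AS_Pcoef)
  have Esum: "(\<Sum>i=0..<s. real (k - (elt L i + 1))) = E"
  proof -
    have "(\<Sum>i=0..<s. real (k - (elt L i + 1))) = (\<Sum>i=0..<s. real k - real (elt L i) - 1)"
    proof (rule sum.cong[OF refl])
      fix i assume "i \<in> {0..<s}"
      then have "elt L i + 1 \<le> k" using eltk by (simp add: Suc_le_eq)
      then show "real (k - (elt L i + 1)) = real k - real (elt L i) - 1" by (simp add: of_nat_diff)
    qed
    also have "\<dots> = real s * real k - (\<Sum>i=0..<s. real (elt L i)) - real s"
      by (simp add: sum_subtractf)
    finally show ?thesis unfolding E_def by (simp add: atLeast0LessThan)
  qed
  define \<alpha> where "\<alpha> = (\<lambda>i. (-1::real)^(elt L i + 1) / fact (k - elt L i - 1))"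
  define \<beta> where "\<beta> = (\<lambda>j. (-1::real)^(elt L j))"
  have Lam2: "Lam = mat s s (\<lambda>(i,j). \<alpha> i * \<beta> j * real ((elt L i + 1) choose elt L j))"
    unfolding Lam_def
  proof (rule mat_cong')
    fix i j assume "i < s" "j < s"
    then show "(case (i, j) of (i, j) \<Rightarrow> lam k (elt L i + 1) (k - elt L j)) =
          (case (i, j) of (i, j) \<Rightarrow> \<alpha> i * \<beta> j * real ((elt L i + 1) choose elt L j))"
      using lam_val[OF eltk eltk] unfolding \<alpha>_def \<beta>_def by simp
  qed
  have ab: "(\<Prod>i=0..<s. \<alpha> i) * (\<Prod>i=0..<s. \<beta> i) = (-1)^s / (\<Prod>i<s. fact (k - elt L i - 1))"
  proof -
    have "(\<Prod>i=0..<s. \<alpha> i) * (\<Prod>i=0..<s. \<beta> i) = (\<Prod>i=0..<s. \<alpha> i * \<beta> i)"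
      by (simp add: prod.distrib)
    also have "\<dots> = (\<Prod>i=0..<s. (-1) / fact (k - elt L i - 1))"
    proof (rule prod.cong[OF refl])
      fix i
      have sq: "((-1::real)^(elt L i)) * (-1)^(elt L i) = 1" by (simp add: power_mult_distrib[symmetric])
      show "\<alpha> i * \<beta> i = (-1) / fact (k - elt L i - 1)"
        unfolding \<alpha>_def \<beta>_def using sq by (simp add: field_simps)
    qed
    also have "\<dots> = (-1)^s / (\<Prod>i<s. fact (k - elt L i - 1))"
      unfolding prod_dividef atLeast0LessThan by simp
    finally show ?thesis .
  qed
  have NmL: "mat s s (\<lambda>(i,j). real ((elt L i + 1) choose elt L j)) = Nm L"
    unfolding Nm_def s_def ..
  have frne: "(\<Prod>R\<in>full_runs L. fact (card R)) \<noteq> (0::real)"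
    by (cases "finite (full_runs L)") (simp_all add: prod_zero_iff)
  have dN: "det (Nm L) = (\<Prod>i<s. real (elt L i + 1)) / (\<Prod>R\<in>full_runs L. fact (card R))"
    using D_lemma[OF finL] prod_elt[OF finL, of "\<lambda>x. real (x+1)"] frne unfolding s_def
    by (simp add: field_simps)
  have detLam: "det Lam = (-1)^s * C"
    unfolding Lam2 det_scale ab NmL dN C_def by (simp add: field_simps)
  have AS2: "AS (\<lambda>n. det (Pmat k L n)) ((-1)^s * C) E"
    using AS1 unfolding Esum detLam .
  have Cne: "C \<noteq> 0"
  proof -
    have "(\<Prod>i<s. real (elt L i + 1)) \<noteq> 0" by (simp add: prod_zero_iff)
    moreover have "(\<Prod>i<s. fact (k - elt L i - 1)) \<noteq> (0::real)" by (simp add: prod_zero_iff)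
    ultimately show ?thesis unfolding C_def using frne by simp
  qed
  have ev: "eventually (\<lambda>n. det (Pmat k L n) \<noteq> 0) at_top"
    by (rule AS_nonzero[OF AS2]) (use Cne in simp)
  have "eventually (\<lambda>n. invertible_mat (Pmat k L n)) at_top"
    using ev
  proof eventually_elim
    case (elim n)
    have "Pmat k L n \<in> carrier_mat s s" unfolding Pm by simp
    then show ?case by (rule invertible_of_det[OF _ elim])
  qed
  then show ?thesis using AS2 unfolding AS_def by simp
qed
end
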